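(* For every objective $f_j:S_j\to[0,1]$ and every common prior $\mathbb{CP}_j$ on $S_j$, if the $N$ agents all condition on $\mathbb{CP}_j$ and communicate via the spanning-tree protocol, they globally $\langle\varepsilon_j,\delta_j\rangle$-agree (i.e. $\Pr(|E^{i,T}_j-E^{k,T}_j|\le\varepsilon_j)>1-\delta_j$ for all pairs $i,k$) after $O\!\left(N^7/(\delta_j\varepsilon_j)^2\right)$ additional messages.
   Context: Task $j$ has finite state space $S_j$ and objective $f_j$. Agents hold knowledge partitions $\Pi^{i,t}_j$ of $S_j$ (common knowledge initially), refined upon receiving messages; after conditioning on a common prior $\mathbb{CP}_j$, agent $i$'s expectation is $E^{i,t}_j=\mathbb E_{\mathbb{CP}_j}[f_j\mid\Pi^{i,t}_j(s)]$. Spanning-tree protocol: agents communicate over a strongly connected directed graph on $[N]$ using an outward and an inward spanning tree rooted at agent $1$, each of diameter $g_j=O(N)$ (worst-case ring), cycling through their edges so that each block of $O(g_j)$ messages forwards every agent's current expectation to every other agent. *)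

theory Defs
  imports "HOL-Probability.Probability"
begin

text \<open>States of the task are natural numbers in a finite set S (any finite state space
  is isomorphic to such an S, so this costs no generality while keeping the hidden
  O-constant uniform).  A knowledge partition of S is given by its
  cell function (cell of the true state s).\<close>

type_synonym kstate = "nat \<Rightarrow> nat \<Rightarrow> nat set"  \<comment> \<open>agent \<Rightarrow> state \<Rightarrow> cell\<close>

definition is_partition_of :: "nat set \<Rightarrow> (nat \<Rightarrow> nat set) \<Rightarrow> bool" where
  "is_partition_of S Q \<longleftrightarrow>
     (\<forall>s\<in>S. s \<in> Q s \<and> Q s \<subseteq> S \<and> (\<forall>s'\<in>Q s. Q s' = Q s))"

definition cexp :: "nat pmf \<Rightarrow> (nat \<Rightarrow> real) \<Rightarrow> nat set \<Rightarrow> real" where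
  "cexp P f C = (\<Sum>s\<in>C. pmf P s * f s) / (\<Sum>s\<in>C. pmf P s)"

definition agent_exp :: "nat pmf \<Rightarrow> (nat \<Rightarrow> real) \<Rightarrow> kstate \<Rightarrow> nat \<Rightarrow> nat \<Rightarrow> real" where
  "agent_exp P f K i s = cexp P f (K i s)"

text \<open>A message (u, v, A) sent during a block whose starting knowledge state is Kb:
  u forwards to v the block-start expectations of all agents k in A; v refines its
  partition by the level sets of these functions.\<close>
definition deliver :: "nat pmf \<Rightarrow> (nat \<Rightarrow> real) \<Rightarrow> kstate \<Rightarrow> kstate \<Rightarrow> nat \<times> nat \<times> nat set \<Rightarrow> kstate" where
  "deliver P f Kb K m = (case m of (u, v, A) \<Rightarrow>
     K(v := (\<lambda>s. K v s \<inter> {s'. \<forall>k\<in>A. agent_exp P f Kb k s' = agent_exp P f Kb k s})))"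

text \<open>Trees given by parent functions: in the inward tree agent i sends to pin i,
  in the outward tree agent i receives from pout i; both rooted at agent 1.\<close>
definition tdepth :: "(nat \<Rightarrow> nat) \<Rightarrow> nat \<Rightarrow> nat" where
  "tdepth p i = (LEAST k. (p ^^ k) i = 1)"

definition tsub :: "(nat \<Rightarrow> nat) \<Rightarrow> nat \<Rightarrow> nat \<Rightarrow> nat set" where
  "tsub p N i = {k \<in> {1..N}. \<exists>m. (p ^^ m) k = i}"

definition theight :: "(nat \<Rightarrow> nat) \<Rightarrow> nat \<Rightarrow> nat" where
  "theight p N = Max (tdepth p ` {1..N})"

definition spanning_trees :: "nat \<Rightarrow> (nat \<times> nat) set \<Rightarrow> (nat \<Rightarrow> nat) \<Rightarrow> (nat \<Rightarrow> nat) \<Rightarrow> bool" where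
  "spanning_trees N E pin pout \<longleftrightarrow>
     E \<subseteq> {1..N} \<times> {1..N} \<and>
     (\<forall>i\<in>{2..N}. pin i \<in> {1..N} \<and> (i, pin i) \<in> E) \<and>
     (\<forall>i\<in>{1..N}. \<exists>m. (pin ^^ m) i = 1) \<and>
     (\<forall>i\<in>{2..N}. pout i \<in> {1..N} \<and> (pout i, i) \<in> E) \<and>
     (\<forall>i\<in>{1..N}. \<exists>m. (pout ^^ m) i = 1)"

text \<open>One block: convergecast up the inward tree (deepest agents first), each agent
  forwarding the block-start expectations of its subtree; then broadcast down the
  outward tree (shallowest first), forwarding all N block-start expectations.\<close>
definition in_phase :: "nat \<Rightarrow> (nat \<Rightarrow> nat) \<Rightarrow> (nat \<times> nat \<times> nat set) list" where
  "in_phase N pin = concat (map (\<lambda>d. map (\<lambda>i. (i, pin i, tsub pin N i))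
        (filter (\<lambda>i. tdepth pin i = d) [1..<N+1])) (rev [1..<theight pin N + 1]))"

definition out_phase :: "nat \<Rightarrow> (nat \<Rightarrow> nat) \<Rightarrow> (nat \<times> nat \<times> nat set) list" where
  "out_phase N pout = concat (map (\<lambda>d. map (\<lambda>i. (pout i, i, {1..N}))
        (filter (\<lambda>i. tdepth pout i = d) [1..<N+1])) [1..<theight pout N + 1])"

definition st_sched :: "nat \<Rightarrow> (nat \<Rightarrow> nat) \<Rightarrow> (nat \<Rightarrow> nat) \<Rightarrow> (nat \<times> nat \<times> nat set) list" where
  "st_sched N pin pout = in_phase N pin @ out_phase N pout"

definition run_msgs :: "nat pmf \<Rightarrow> (nat \<Rightarrow> real) \<Rightarrow> (nat \<times> nat \<times> nat set) list \<Rightarrow> kstate \<Rightarrow> kstate" where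
  "run_msgs P f ms Kb = fold (\<lambda>m K. deliver P f Kb K m) ms Kb"

definition st_run :: "nat pmf \<Rightarrow> (nat \<Rightarrow> real) \<Rightarrow> nat \<Rightarrow> (nat \<Rightarrow> nat) \<Rightarrow> (nat \<Rightarrow> nat) \<Rightarrow> kstate \<Rightarrow> nat \<Rightarrow> kstate" where
  "st_run P f N pin pout K0 t =
     (let sch = st_sched N pin pout; L = length sch;
          Kb = (run_msgs P f sch ^^ (t div L)) K0
      in run_msgs P f (take (t mod L) sch) Kb)"

definition global_agree :: "nat pmf \<Rightarrow> (nat \<Rightarrow> real) \<Rightarrow> nat \<Rightarrow> kstate \<Rightarrow> real \<Rightarrow> real \<Rightarrow> bool" where
  "global_agree P f N K \<epsilon> \<delta> \<longleftrightarrow>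
     (\<forall>i\<in>{1..N}. \<forall>k\<in>{1..N}.
        measure_pmf.prob P {s. \<bar>agent_exp P f K i s - agent_exp P f K k s\<bar> \<le> \<epsilon>} > 1 - \<delta>)"

end

theory Submission imports Defs begin


lemma part_sym:
  assumes "is_partition_of S Q" "s \<in> S" "t \<in> S"
  shows "t \<in> Q s \<longleftrightarrow> s \<in> Q t"
  using assms unfolding is_partition_of_def by metis

lemma prob_fin:
  assumes "finite S" "set_pmf P \<subseteq> S"
  shows "measure_pmf.prob P A = (\<Sum>s\<in>S. pmf P s * indicator A s)"
proof -
  have "measure_pmf.prob P A = measure_pmf.prob P (A \<inter> set_pmf P)"
    by (simp add: measure_Int_set_pmf)
  also have "A \<inter> set_pmf P = (A \<inter> S) \<inter> set_pmf P" using assms by auto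
  also have "measure_pmf.prob P \<dots> = measure_pmf.prob P (A \<inter> S)"
    by (simp add: measure_Int_set_pmf)
  also have "\<dots> = sum (pmf P) (A \<inter> S)" using assms by (simp add: measure_measure_pmf_finite)
  also have "\<dots> = (\<Sum>s\<in>S. pmf P s * indicator A s)"
    using assms(1) by (simp add: sum.inter_restrict indicator_def if_distrib Int_commute cong: if_cong)
  finally show ?thesis .
qed

lemma tower:
  assumes S: "finite S" and Q: "is_partition_of S Q"
    and Z: "\<forall>s\<in>S. \<forall>t\<in>Q s. Z t = Z s"
  shows "(\<Sum>s\<in>S. pmf P s * cexp P f (Q s) * Z s) = (\<Sum>s\<in>S. pmf P s * f s * Z s)"
proof -
  define p where "p = pmf P"
  define D where "D s = (\<Sum>t\<in>Q s. p t)" for s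
  have QS: "Q s \<subseteq> S" "s \<in> Q s" if "s \<in> S" for s using Q that unfolding is_partition_of_def by blast+
  have Qeq: "Q t = Q s" if "s \<in> S" "t \<in> Q s" for s t using Q that unfolding is_partition_of_def by blast
  have "(\<Sum>s\<in>S. p s * cexp P f (Q s) * Z s)
      = (\<Sum>s\<in>S. \<Sum>t\<in>S. if t \<in> Q s then p s * p t * f t * Z s / D s else 0)"
  proof (rule sum.cong[OF refl])
    fix s assume s: "s \<in> S"
    have "p s * cexp P f (Q s) * Z s = (\<Sum>t\<in>Q s. p s * p t * f t * Z s / D s)"
      unfolding cexp_def D_def p_def by (simp add: sum_distrib_left sum_divide_distrib mult_ac)
    also have "\<dots> = (\<Sum>t\<in>S. if t \<in> Q s then p s * p t * f t * Z s / D s else 0)"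
      using QS[OF s] S by (simp add: sum.inter_restrict[symmetric] Int_absorb1 Int_commute)
    finally show "p s * cexp P f (Q s) * Z s = (\<Sum>t\<in>S. if t \<in> Q s then p s * p t * f t * Z s / D s else 0)" .
  qed
  also have "\<dots> = (\<Sum>t\<in>S. \<Sum>s\<in>S. if t \<in> Q s then p s * p t * f t * Z s / D s else 0)"
    by (rule sum.swap)
  also have "\<dots> = (\<Sum>t\<in>S. p t * f t * Z t)"
  proof (rule sum.cong[OF refl])
    fix t assume t: "t \<in> S"
    have "(\<Sum>s\<in>S. if t \<in> Q s then p s * p t * f t * Z s / D s else 0)
        = (\<Sum>s\<in>S. if s \<in> Q t then p s * (p t * f t * Z t / D t) else 0)"
    proof (rule sum.cong[OF refl])
      fix s assume s: "s \<in> S"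
      show "(if t \<in> Q s then p s * p t * f t * Z s / D s else 0) = (if s \<in> Q t then p s * (p t * f t * Z t / D t) else 0)"
      proof (cases "s \<in> Q t")
        case True
        then have "Q s = Q t" "Z s = Z t" using Qeq[OF t] Z t by auto
        then show ?thesis using True part_sym[OF Q s t] by (simp add: D_def)
      next
        case False then show ?thesis using part_sym[OF Q s t] by simp
      qed
    qed
    also have "\<dots> = (\<Sum>s\<in>Q t. p s) * (p t * f t * Z t / D t)"
      using QS[OF t] S by (simp add: sum.inter_restrict[symmetric] Int_absorb1 Int_commute sum_distrib_right sum_divide_distrib)
    also have "\<dots> = p t * f t * Z t"
    proof (cases "D t = 0")
      case True
      have "p t \<le> D t" unfolding D_def
        using QS[OF t] S by (intro member_le_sum) (auto simp: p_def intro: finite_subset)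
      then have "p t = 0" using True by (simp add: p_def pmf_nonneg order_antisym)
      then show ?thesis by (simp add: D_def[symmetric])
    next
      case False then show ?thesis by (simp add: D_def[symmetric])
    qed
    finally show "(\<Sum>s\<in>S. if t \<in> Q s then p s * p t * f t * Z s / D s else 0) = p t * f t * Z t" .
  qed
  finally show ?thesis by (simp add: p_def)
qed

lemma cexp_bounds:
  assumes "finite C" "\<forall>s\<in>C. 0 \<le> f s \<and> f s \<le> 1"
  shows "0 \<le> cexp P f C \<and> cexp P f C \<le> 1"
proof -
  have a: "0 \<le> (\<Sum>s\<in>C. pmf P s * f s)" using assms by (intro sum_nonneg) auto
  have b: "(\<Sum>s\<in>C. pmf P s * f s) \<le> (\<Sum>s\<in>C. pmf P s)"
  proof (rule sum_mono)
    fix s assume "s \<in> C"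
    then have "f s \<le> 1" using assms by auto
    then show "pmf P s * f s \<le> pmf P s" by (rule mult_left_le) simp
  qed
  have c: "0 \<le> (\<Sum>s\<in>C. pmf P s)" by (intro sum_nonneg) simp
  have "cexp P f C \<le> 1"
  proof (cases "(\<Sum>s\<in>C. pmf P s) = 0")
    case True then show ?thesis unfolding cexp_def by simp
  next
    case False then have "(\<Sum>s\<in>C. pmf P s) > 0" using c by linarith
    then show ?thesis unfolding cexp_def using b by (simp add: divide_le_eq_1)
  qed
  moreover have "0 \<le> cexp P f C" unfolding cexp_def using a c by (rule divide_nonneg_nonneg)
  ultimately show ?thesis by simp
qed

lemma pt_id: "(p::real) * (a - y)^2 = p * (a - b)^2 + p * (b - y)^2 + 2 * (p * a * (b - y) - p * b * (b - y))"
  by (simp add: power2_eq_square algebra_simps)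

lemma refine:
  assumes S: "finite S" and Q: "is_partition_of S Q" and G: "is_partition_of S G"
    and QG: "\<forall>s\<in>S. Q s \<subseteq> G s" and Y: "\<forall>s\<in>S. \<forall>t\<in>G s. Y t = Y s"
  shows "(\<Sum>s\<in>S. pmf P s * (cexp P f (Q s) - Y s)^2)
       = (\<Sum>s\<in>S. pmf P s * (cexp P f (Q s) - cexp P f (G s))^2)
       + (\<Sum>s\<in>S. pmf P s * (cexp P f (G s) - Y s)^2)"
proof -
  define a where "a s = cexp P f (Q s)" for s
  define b where "b s = cexp P f (G s)" for s
  define Z where "Z s = b s - Y s" for s
  have ZG: "\<forall>s\<in>S. \<forall>t\<in>G s. Z t = Z s"
  proof (intro ballI)
    fix s t assume s: "s \<in> S" and t: "t \<in> G s"
    have "G t = G s" using G s t unfolding is_partition_of_def by blast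
    then show "Z t = Z s" using Y s t unfolding Z_def b_def by simp
  qed
  have ZQ: "\<forall>s\<in>S. \<forall>t\<in>Q s. Z t = Z s" using ZG QG by auto
  have e: "(\<Sum>s\<in>S. pmf P s * a s * Z s) = (\<Sum>s\<in>S. pmf P s * b s * Z s)"
    using tower[OF S Q ZQ] tower[OF S G ZG] unfolding a_def b_def by simp
  have "(\<Sum>s\<in>S. pmf P s * (a s - Y s)^2)
      = (\<Sum>s\<in>S. pmf P s * (a s - b s)^2 + pmf P s * (b s - Y s)^2
          + 2 * (pmf P s * a s * Z s - pmf P s * b s * Z s))"
    unfolding Z_def by (rule sum.cong[OF refl]) (rule pt_id)
  also have "\<dots> = (\<Sum>s\<in>S. pmf P s * (a s - b s)^2) + (\<Sum>s\<in>S. pmf P s * (b s - Y s)^2)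
      + 2 * ((\<Sum>s\<in>S. pmf P s * a s * Z s) - (\<Sum>s\<in>S. pmf P s * b s * Z s))"
    by (simp only: sum.distrib sum_subtractf[symmetric] sum_distrib_left)
  also have "\<dots> = (\<Sum>s\<in>S. pmf P s * (a s - b s)^2) + (\<Sum>s\<in>S. pmf P s * (b s - Y s)^2)"
    using e by simp
  finally show ?thesis unfolding a_def b_def .
qed



lemma deliver_shrink: "deliver P f Kb K m w s \<subseteq> K w s"
  unfolding deliver_def by (cases m) auto

lemma fold_shrink: "fold (\<lambda>m K. deliver P f Kb K m) ms K w s \<subseteq> K w s"
proof (induction ms arbitrary: K)
  case Nil then show ?case by simp
next
  case (Cons m ms)
  then show ?case using deliver_shrink[of P f Kb K m w s] by (metis fold_Cons comp_apply subset_trans)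
qed

lemma fold_msg:
  assumes "(u, v, A) \<in> set ms"
  shows "fold (\<lambda>m K. deliver P f Kb K m) ms K v s \<subseteq> {s'. \<forall>k\<in>A. agent_exp P f Kb k s' = agent_exp P f Kb k s}"
  using assms
proof (induction ms arbitrary: K)
  case Nil then show ?case by simp
next
  case (Cons m ms)
  show ?case
  proof (cases "m = (u, v, A)")
    case True
    have "fold (\<lambda>m K. deliver P f Kb K m) (m # ms) K v s \<subseteq> deliver P f Kb K m v s"
      using fold_shrink[of P f Kb ms "deliver P f Kb K m" v s] by simp
    also have "\<dots> \<subseteq> {s'. \<forall>k\<in>A. agent_exp P f Kb k s' = agent_exp P f Kb k s}"
      using True unfolding deliver_def by auto
    finally show ?thesis .
  next
    case False
    then have "(u, v, A) \<in> set ms" using Cons.prems by simp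
    then show ?thesis using Cons.IH[of "deliver P f Kb K m"] by simp
  qed
qed

lemma deliver_part:
  assumes "is_partition_of S (K w)"
  shows "is_partition_of S (deliver P f Kb K m w)"
proof (cases m)
  case (fields u v A)
  show ?thesis
  proof (cases "w = v")
    case False then show ?thesis using assms fields unfolding deliver_def by simp
  next
    case True
    define L where "L s = {s'. \<forall>k\<in>A. agent_exp P f Kb k s' = agent_exp P f Kb k s}" for s
    have d: "deliver P f Kb K m w = (\<lambda>s. K w s \<inter> L s)"
      using fields True unfolding deliver_def L_def by simp
    show ?thesis unfolding d is_partition_of_def
    proof (intro ballI conjI)
      fix s assume s: "s \<in> S"
      have "s \<in> K w s" "K w s \<subseteq> S" using assms s unfolding is_partition_of_def by blast+
      then show "s \<in> K w s \<inter> L s" "K w s \<inter> L s \<subseteq> S" unfolding L_def by auto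
      fix s' assume s': "s' \<in> K w s \<inter> L s"
      have "K w s' = K w s" using assms s s' unfolding is_partition_of_def by blast
      moreover have "L s' = L s" using s' unfolding L_def by auto
      ultimately show "K w s' \<inter> L s' = K w s \<inter> L s" by simp
    qed
  qed
qed

lemma fold_part:
  assumes "is_partition_of S (K w)"
  shows "is_partition_of S (fold (\<lambda>m K. deliver P f Kb K m) ms K w)"
  using assms
proof (induction ms arbitrary: K)
  case Nil then show ?case by simp
next
  case (Cons m ms)
  have "is_partition_of S (deliver P f Kb K m w)" by (rule deliver_part) (rule Cons.prems)
  then show ?case using Cons.IH by simp
qed

lemma len_filter_split:
  assumes "d \<notin> set ds"
  shows "length (filter (\<lambda>i. D i \<in> set (d # ds)) xs)
       = length (filter (\<lambda>i. D i = d) xs) + length (filter (\<lambda>i. D i \<in> set ds) xs)"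
  using assms by (induction xs) auto

lemma len_phase:
  assumes "distinct ds"
  shows "length (concat (map (\<lambda>d. map g (filter (\<lambda>i. D i = d) xs)) ds))
       = length (filter (\<lambda>i. D i \<in> set ds) xs)"
  using assms
proof (induction ds)
  case Nil then show ?case by simp
next
  case (Cons d ds)
  then show ?case using len_filter_split[of d ds D xs] by simp
qed

lemma sched_len: "length (st_sched N pin pout) \<le> 2 * N"
proof -
  have a: "length (in_phase N pin) \<le> N"
  proof -
    have "length (in_phase N pin) = length (filter (\<lambda>i. tdepth pin i \<in> set (rev [1..<theight pin N + 1])) [1..<N+1])"
      unfolding in_phase_def by (subst len_phase) simp_all
    also have "\<dots> \<le> N" by (metis length_filter_le length_upt diff_Suc_1 Suc_eq_plus1)
    finally show ?thesis .
  qed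
  have b: "length (out_phase N pout) \<le> N"
  proof -
    have "length (out_phase N pout) = length (filter (\<lambda>i. tdepth pout i \<in> set [1..<theight pout N + 1]) [1..<N+1])"
      unfolding out_phase_def by (subst len_phase) simp_all
    also have "\<dots> \<le> N" by (metis length_filter_le length_upt diff_Suc_1 Suc_eq_plus1)
    finally show ?thesis .
  qed
  show ?thesis unfolding st_sched_def using a b by simp
qed



lemma theight_ge:
  assumes "i \<in> {1..N}" shows "tdepth p i \<le> theight p N"
  unfolding theight_def using assms by (intro Max_ge) auto

lemma sched_cover:
  assumes sp: "spanning_trees N E pin pout" and v: "v \<in> {1..N}" and k: "k \<in> {1..N}" and kv: "k \<noteq> v"
  shows "\<exists>u A. (u, v, A) \<in> set (st_sched N pin pout) \<and> k \<in> A"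
proof (cases "v = 1")
  case False
  then have v2: "v \<in> {2..N}" using v by auto
  have ex: "\<exists>m. (pout ^^ m) v = 1" using sp v unfolding spanning_trees_def by blast
  define d where "d = tdepth pout v"
  have d1: "(pout ^^ d) v = 1" unfolding d_def tdepth_def using ex by (rule LeastI_ex)
  have d0: "d \<noteq> 0" using d1 False by (metis funpow_0)
  have dh: "d \<le> theight pout N" unfolding d_def using v by (rule theight_ge)
  have m1: "(pout v, v, {1..N}) \<in> set (map (\<lambda>i. (pout i, i, {1..N})) (filter (\<lambda>i. tdepth pout i = d) [1..<N+1]))"
  proof -
    have vf: "v \<in> set (filter (\<lambda>i. tdepth pout i = d) [1..<N+1])" using v by (simp del: upt_Suc add: d_def)
    show ?thesis unfolding set_map by (rule image_eqI[where x=v], simp, rule vf)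
  qed
  have m2: "d \<in> set [1..<theight pout N + 1]" using d0 dh by auto
  have "(pout v, v, {1..N}) \<in> set (out_phase N pout)"
    unfolding out_phase_def set_concat set_map using m1 m2 by blast
  then show ?thesis using k unfolding st_sched_def by (intro exI[of _ "pout v"] exI[of _ "{1..N}"]) auto
next
  case True
  then have k2: "k \<in> {2..N}" using k kv by auto
  have ex: "\<exists>m. (pin ^^ m) k = 1" using sp k unfolding spanning_trees_def by blast
  define m0 where "m0 = (LEAST m. (pin ^^ m) k = 1)"
  have m01: "(pin ^^ m0) k = 1" unfolding m0_def using ex by (rule LeastI_ex)
  have lt: "(pin ^^ j) k \<noteq> 1" if "j < m0" for j
    using that not_less_Least unfolding m0_def by blast
  have m0pos: "m0 \<noteq> 0" using m01 k2 by (metis funpow_0 atLeastAtMost_iff one_less_numeral_iff semiring_norm(76) not_le numeral_le_one_iff le_antisym)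
  have inr: "(pin ^^ j) k \<in> {2..N}" if "j < m0" for j
    using that
  proof (induction j)
    case 0 then show ?case using k2 by simp
  next
    case (Suc j)
    then have "(pin ^^ j) k \<in> {2..N}" by simp
    then have "pin ((pin ^^ j) k) \<in> {1..N}" using sp unfolding spanning_trees_def by blast
    moreover have "(pin ^^ Suc j) k \<noteq> 1" using lt Suc.prems by blast
    ultimately show ?case by auto
  qed
  define c where "c = (pin ^^ (m0 - 1)) k"
  have c2: "c \<in> {2..N}" unfolding c_def using inr m0pos by simp
  have pc: "pin c = 1" using m01 m0pos unfolding c_def
    by (metis Suc_pred' bot_nat_0.not_eq_extremum comp_apply funpow.simps(2))
  have tc: "tdepth pin c = 1" unfolding tdepth_def
  proof (rule Least_equality)
    show "(pin ^^ 1) c = 1" using pc by simp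
    fix y assume "(pin ^^ y) c = 1"
    then show "1 \<le> y" using c2 by (cases y) auto
  qed
  have kt: "k \<in> tsub pin N c" unfolding tsub_def c_def using k by blast
  have h1: "1 \<le> theight pin N" using theight_ge[of c N pin] c2 tc by simp
  have m1: "(c, pin c, tsub pin N c) \<in> set (map (\<lambda>i. (i, pin i, tsub pin N i)) (filter (\<lambda>i. tdepth pin i = 1) [1..<N+1]))"
  proof -
    have vf: "c \<in> set (filter (\<lambda>i. tdepth pin i = 1) [1..<N+1])" using c2 tc by (simp del: upt_Suc)
    show ?thesis unfolding set_map by (rule image_eqI[where x=c], simp, rule vf)
  qed
  have m2: "(1::nat) \<in> set (rev [1..<theight pin N + 1])" using h1 by auto
  have "(c, pin c, tsub pin N c) \<in> set (in_phase N pin)"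
    unfolding in_phase_def set_concat set_map using m1 m2 by blast
  then show ?thesis using kt pc True unfolding st_sched_def by (intro exI[of _ c] exI[of _ "tsub pin N c"]) auto
qed


definition Phi :: "nat pmf \<Rightarrow> (nat \<Rightarrow> real) \<Rightarrow> nat \<Rightarrow> nat set \<Rightarrow> kstate \<Rightarrow> real" where
  "Phi P f N S K = (\<Sum>i\<in>{1..N}. \<Sum>s\<in>S. pmf P s * (agent_exp P f K i s)^2)"

lemma part_cell:
  assumes "is_partition_of S Q" "s \<in> S" "t \<in> Q s"
  shows "Q t = Q s" "t \<in> S"
  using assms unfolding is_partition_of_def by blast+

lemma agent_exp_bounds:
  assumes S: "finite S" and f: "\<forall>s\<in>S. 0 \<le> f s \<and> f s \<le> 1" and K: "is_partition_of S (K i)" and s: "s \<in> S"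
  shows "0 \<le> agent_exp P f K i s \<and> agent_exp P f K i s \<le> 1"
proof -
  have "K i s \<subseteq> S" using K s unfolding is_partition_of_def by blast
  then show ?thesis unfolding agent_exp_def using S f by (intro cexp_bounds) (auto intro: finite_subset)
qed

lemma Phi_bounds:
  assumes S: "finite S" and P: "set_pmf P \<subseteq> S" and f: "\<forall>s\<in>S. 0 \<le> f s \<and> f s \<le> 1"
    and K: "\<forall>i\<in>{1..N}. is_partition_of S (K i)"
  shows "0 \<le> Phi P f N S K \<and> Phi P f N S K \<le> real N"
proof -
  have one: "(\<Sum>s\<in>S. pmf P s * (agent_exp P f K i s)^2) \<le> 1" if i: "i \<in> {1..N}" for i
  proof -
    have "(\<Sum>s\<in>S. pmf P s * (agent_exp P f K i s)^2) \<le> (\<Sum>s\<in>S. pmf P s)"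
    proof (rule sum_mono)
      fix s assume s: "s \<in> S"
      have b: "0 \<le> agent_exp P f K i s \<and> agent_exp P f K i s \<le> 1"
        using agent_exp_bounds[OF S f _ s] K i by blast
      then have "(agent_exp P f K i s)^2 \<le> 1" by (simp add: power_le_one)
      then show "pmf P s * (agent_exp P f K i s)^2 \<le> pmf P s" by (rule mult_left_le) simp
    qed
    also have "\<dots> = 1" using S P by (rule sum_pmf_eq_1)
    finally show ?thesis .
  qed
  have "Phi P f N S K \<le> (\<Sum>i\<in>{1..N}. 1)" unfolding Phi_def by (rule sum_mono) (rule one)
  moreover have "0 \<le> Phi P f N S K" unfolding Phi_def by (intro sum_nonneg mult_nonneg_nonneg) auto
  ultimately show ?thesis by simp
qed

lemma block_cell:
  assumes sp: "spanning_trees N E pin pout" and Kb: "\<forall>i\<in>{1..N}. is_partition_of S (Kb i)"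
    and v: "v \<in> {1..N}" and s: "s \<in> S"
  shows "run_msgs P f (st_sched N pin pout) Kb v s \<subseteq> Kb v s"
    "\<forall>k\<in>{1..N}. \<forall>s'\<in>run_msgs P f (st_sched N pin pout) Kb v s. agent_exp P f Kb k s' = agent_exp P f Kb k s"
proof -
  show "run_msgs P f (st_sched N pin pout) Kb v s \<subseteq> Kb v s"
    unfolding run_msgs_def by (rule fold_shrink)
  show "\<forall>k\<in>{1..N}. \<forall>s'\<in>run_msgs P f (st_sched N pin pout) Kb v s. agent_exp P f Kb k s' = agent_exp P f Kb k s"
  proof (intro ballI)
    fix k s' assume k: "k \<in> {1..N}" and s': "s' \<in> run_msgs P f (st_sched N pin pout) Kb v s"
    show "agent_exp P f Kb k s' = agent_exp P f Kb k s"
    proof (cases "k = v")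
      case True
      have "s' \<in> Kb v s" using s' unfolding run_msgs_def using fold_shrink by blast
      then have "Kb v s' = Kb v s" using part_cell(1)[of S "Kb v" s s'] Kb v s by blast
      then show ?thesis using True unfolding agent_exp_def by simp
    next
      case False
      then obtain u A where uA: "(u, v, A) \<in> set (st_sched N pin pout)" "k \<in> A"
        using sched_cover[OF sp v k] by blast
      show ?thesis using fold_msg[OF uA(1), of P f Kb Kb s] s' uA(2) unfolding run_msgs_def by blast
    qed
  qed
qed

lemma block_part:
  assumes Kb: "\<forall>i\<in>{1..N}. is_partition_of S (Kb i)"
  shows "\<forall>i\<in>{1..N}. is_partition_of S (run_msgs P f ms Kb i)"
  using Kb fold_part unfolding run_msgs_def by blast

lemma gain:
  assumes S: "finite S" and Q: "is_partition_of S Q" and G: "is_partition_of S G"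
    and QG: "\<forall>s\<in>S. Q s \<subseteq> G s"
  shows "(\<Sum>s\<in>S. pmf P s * (cexp P f (Q s))^2) - (\<Sum>s\<in>S. pmf P s * (cexp P f (G s))^2)
       = (\<Sum>s\<in>S. pmf P s * (cexp P f (Q s) - cexp P f (G s))^2)"
  using refine[OF S Q G QG, of "\<lambda>_. 0" P f] by simp

lemma pt_ineq:
  assumes p: "0 \<le> (p::real)" and e: "0 < e"
  shows "p * e^2 / 2 * indicator {s. \<not> \<bar>a s - b s\<bar> \<le> e} s \<le> p * ((w - a s)^2 + (w - b s)^2)"
proof (cases "\<bar>a s - b s\<bar> \<le> e")
  case True then show ?thesis using p by (simp add: indicator_def)
next
  case False
  then have "e^2 < \<bar>a s - b s\<bar>^2" using e by (intro power_strict_mono) auto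
  then have "e^2 < (a s - b s)^2" by simp
  moreover have "(a s - b s)^2 \<le> 2 * ((w - a s)^2 + (w - b s)^2)"
    using sum_squares_ge_zero[of "2*w - a s - b s" 0]
    by (simp add: power2_eq_square algebra_simps)
  ultimately have "e^2 / 2 \<le> (w - a s)^2 + (w - b s)^2" by simp
  then have "p * (e^2 / 2) \<le> p * ((w - a s)^2 + (w - b s)^2)" using p by (rule mult_left_mono)
  then show ?thesis using False by (simp add: indicator_def)
qed

lemma block_gain:
  assumes S: "finite S" and P: "set_pmf P \<subseteq> S" and f: "\<forall>s\<in>S. 0 \<le> f s \<and> f s \<le> 1"
    and sp: "spanning_trees N E pin pout" and Kb: "\<forall>i\<in>{1..N}. is_partition_of S (Kb i)"
    and K': "K' = run_msgs P f (st_sched N pin pout) Kb"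
  shows "Phi P f N S Kb \<le> Phi P f N S K'"
    "\<lbrakk>\<not> global_agree P f N Kb \<epsilon> \<delta>; 0 < \<epsilon>; 0 < \<delta>\<rbrakk> \<Longrightarrow> Phi P f N S Kb + \<delta> * \<epsilon>^2 / 2 \<le> Phi P f N S K'"
proof -
  have K'p: "\<forall>i\<in>{1..N}. is_partition_of S (K' i)" unfolding K' by (rule block_part[OF Kb])
  define g where "g i = (\<Sum>s\<in>S. pmf P s * (agent_exp P f K' i s - agent_exp P f Kb i s)^2)" for i
  have g0: "0 \<le> g i" for i unfolding g_def by (intro sum_nonneg mult_nonneg_nonneg) auto
  have sub: "\<forall>s\<in>S. K' i s \<subseteq> Kb i s" if "i \<in> {1..N}" for i
    using block_cell(1)[OF sp Kb that] unfolding K' by blast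
  have gi: "(\<Sum>s\<in>S. pmf P s * (agent_exp P f K' i s)^2) - (\<Sum>s\<in>S. pmf P s * (agent_exp P f Kb i s)^2) = g i"
    if i: "i \<in> {1..N}" for i
    unfolding g_def agent_exp_def using gain[OF S _ _ sub[OF i]] K'p Kb i by blast
  have diff: "Phi P f N S K' - Phi P f N S Kb = (\<Sum>i\<in>{1..N}. g i)"
  proof -
    have "Phi P f N S K' - Phi P f N S Kb = (\<Sum>i\<in>{1..N}. (\<Sum>s\<in>S. pmf P s * (agent_exp P f K' i s)^2) - (\<Sum>s\<in>S. pmf P s * (agent_exp P f Kb i s)^2))"
      unfolding Phi_def by (rule sum_subtractf[symmetric])
    also have "\<dots> = (\<Sum>i\<in>{1..N}. g i)" by (rule sum.cong[OF refl]) (rule gi)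
    finally show ?thesis .
  qed
  show "Phi P f N S Kb \<le> Phi P f N S K'" using diff sum_nonneg[of "{1..N}" g] g0 by simp
  assume na: "\<not> global_agree P f N Kb \<epsilon> \<delta>" and e: "0 < \<epsilon>" and d: "0 < \<delta>"
  then obtain i k where i: "i \<in> {1..N}" and k: "k \<in> {1..N}"
    and pr: "measure_pmf.prob P {s. \<bar>agent_exp P f Kb i s - agent_exp P f Kb k s\<bar> \<le> \<epsilon>} \<le> 1 - \<delta>"
    unfolding global_agree_def by (auto simp: not_less)
  define a where "a = agent_exp P f Kb i"
  define b where "b = agent_exp P f Kb k"
  define X where "X = {s. \<bar>a s - b s\<bar> \<le> \<epsilon>}"
  have pr1: "(\<Sum>s\<in>S. pmf P s * indicator X s) \<le> 1 - \<delta>"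
    using pr prob_fin[OF S P, of X] unfolding X_def a_def b_def by simp
  have tot: "(\<Sum>s\<in>S. pmf P s * indicator X s) + (\<Sum>s\<in>S. pmf P s * indicator (-X) s) = 1"
  proof -
    have "(\<Sum>s\<in>S. pmf P s * indicator X s) + (\<Sum>s\<in>S. pmf P s * indicator (-X) s) = (\<Sum>s\<in>S. pmf P s)"
      unfolding sum.distrib[symmetric] by (rule sum.cong[OF refl]) (simp add: indicator_def)
    also have "\<dots> = 1" using S P by (rule sum_pmf_eq_1)
    finally show ?thesis .
  qed
  then have pr2: "\<delta> \<le> (\<Sum>s\<in>S. pmf P s * indicator (-X) s)" using pr1 by simp
  have ik: "i \<noteq> k"
  proof
    assume "i = k"
    then have "X = UNIV" unfolding X_def a_def b_def using e by auto
    then have "(\<Sum>s\<in>S. pmf P s * indicator (-X) s) = 0" by simp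
    then show False using pr2 d by simp
  qed
  define Lev where "Lev s = {s'\<in>S. a s' = a s \<and> b s' = b s}" for s
  have Levp: "is_partition_of S Lev" unfolding is_partition_of_def Lev_def by auto
  define W where "W s = cexp P f (Lev s)" for s
  have subL: "\<forall>s\<in>S. K' j s \<subseteq> Lev s" if j: "j \<in> {1..N}" and jj: "j = i \<or> j = k" for j
  proof
    fix s assume s: "s \<in> S"
    show "K' j s \<subseteq> Lev s"
    proof
      fix s' assume s': "s' \<in> K' j s"
      have "s' \<in> S" using part_cell(2)[of S "K' j" s s'] K'p j s s' by blast
      moreover have "\<forall>k\<in>{1..N}. agent_exp P f Kb k s' = agent_exp P f Kb k s"
        using block_cell(2)[OF sp Kb j s, of P f] s' unfolding K' by blast
      ultimately show "s' \<in> Lev s" unfolding Lev_def a_def b_def using i k by blast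
    qed
  qed
  have gL: "(\<Sum>s\<in>S. pmf P s * (W s - agent_exp P f Kb j s)^2) \<le> g j"
    if j: "j \<in> {1..N}" and jj: "j = i \<or> j = k" for j
  proof -
    have Yc: "\<forall>s\<in>S. \<forall>t\<in>Lev s. agent_exp P f Kb j t = agent_exp P f Kb j s"
      using jj unfolding Lev_def a_def b_def by auto
    have "g j = (\<Sum>s\<in>S. pmf P s * (cexp P f (K' j s) - W s)^2) + (\<Sum>s\<in>S. pmf P s * (W s - agent_exp P f Kb j s)^2)"
      unfolding g_def W_def agent_exp_def
      using refine[OF S _ Levp subL[OF j jj] Yc[unfolded agent_exp_def], of P f] K'p j by blast
    moreover have "0 \<le> (\<Sum>s\<in>S. pmf P s * (cexp P f (K' j s) - W s)^2)"
      by (intro sum_nonneg mult_nonneg_nonneg) auto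
    ultimately show ?thesis by simp
  qed
  have "\<delta> * (\<epsilon>^2 / 2) \<le> (\<Sum>s\<in>S. pmf P s * indicator (-X) s) * (\<epsilon>^2 / 2)"
    using pr2 by (rule mult_right_mono) simp
  then have "\<delta> * \<epsilon>^2 / 2 \<le> (\<Sum>s\<in>S. pmf P s * indicator (-X) s) * (\<epsilon>^2 / 2)" by simp
  also have "\<dots> = (\<Sum>s\<in>S. pmf P s * \<epsilon>^2 / 2 * indicator {s. \<not> \<bar>a s - b s\<bar> \<le> \<epsilon>} s)"
    unfolding X_def sum_distrib_right by (rule sum.cong[OF refl]) (simp add: indicator_def)
  also have "\<dots> \<le> (\<Sum>s\<in>S. pmf P s * ((W s - a s)^2 + (W s - b s)^2))"
    by (intro sum_mono pt_ineq e) simp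
  also have "\<dots> = (\<Sum>s\<in>S. pmf P s * (W s - a s)^2) + (\<Sum>s\<in>S. pmf P s * (W s - b s)^2)"
    by (simp add: sum.distrib distrib_left)
  also have "\<dots> \<le> g i + g k" using gL[OF i] gL[OF k] unfolding a_def b_def by (intro add_mono) auto
  also have "\<dots> = (\<Sum>j\<in>{i,k}. g j)" using ik by simp
  also have "\<dots> \<le> (\<Sum>j\<in>{1..N}. g j)" using i k g0 by (intro sum_mono2) auto
  finally show "Phi P f N S Kb + \<delta> * \<epsilon>^2 / 2 \<le> Phi P f N S K'" using diff by simp
qed

lemma iter:
  assumes S: "finite S" and P: "set_pmf P \<subseteq> S" and f: "\<forall>s\<in>S. 0 \<le> f s \<and> f s \<le> 1"
    and sp: "spanning_trees N E pin pout" and K0: "\<forall>i\<in>{1..N}. is_partition_of S (K0 i)"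
    and e: "0 < \<epsilon>" and d: "0 < \<delta>"
  shows "(\<forall>i\<in>{1..N}. is_partition_of S (((run_msgs P f (st_sched N pin pout)) ^^ n) K0 i)) \<and>
    ((\<forall>m<n. \<not> global_agree P f N (((run_msgs P f (st_sched N pin pout)) ^^ m) K0) \<epsilon> \<delta>) \<longrightarrow>
      real n * (\<delta> * \<epsilon>^2 / 2) \<le> Phi P f N S (((run_msgs P f (st_sched N pin pout)) ^^ n) K0))"
proof (induction n)
  case 0
  then show ?case using K0 Phi_bounds[OF S P f K0] by simp
next
  case (Suc n)
  let ?R = "run_msgs P f (st_sched N pin pout)"
  have pn: "\<forall>i\<in>{1..N}. is_partition_of S ((?R ^^ n) K0 i)" using Suc.IH by blast
  have eq: "(?R ^^ Suc n) K0 = ?R ((?R ^^ n) K0)" by simp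
  have p1: "\<forall>i\<in>{1..N}. is_partition_of S ((?R ^^ Suc n) K0 i)"
    unfolding eq by (rule block_part[OF pn])
  have bg: "Phi P f N S ((?R ^^ n) K0) \<le> Phi P f N S ((?R ^^ Suc n) K0)"
    "\<lbrakk>\<not> global_agree P f N ((?R ^^ n) K0) \<epsilon> \<delta>; 0 < \<epsilon>; 0 < \<delta>\<rbrakk> \<Longrightarrow>
      Phi P f N S ((?R ^^ n) K0) + \<delta> * \<epsilon>^2 / 2 \<le> Phi P f N S ((?R ^^ Suc n) K0)"
    using block_gain[OF S P f sp pn eq] by blast+
  have "real (Suc n) * (\<delta> * \<epsilon>^2 / 2) \<le> Phi P f N S ((?R ^^ Suc n) K0)"
    if na: "\<forall>m<Suc n. \<not> global_agree P f N ((?R ^^ m) K0) \<epsilon> \<delta>"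
  proof -
    have "real n * (\<delta> * \<epsilon>^2 / 2) \<le> Phi P f N S ((?R ^^ n) K0)" using Suc.IH na by auto
    moreover have "Phi P f N S ((?R ^^ n) K0) + \<delta> * \<epsilon>^2 / 2 \<le> Phi P f N S ((?R ^^ Suc n) K0)"
      using bg(2) na e d by blast
    ultimately show ?thesis by (simp add: algebra_simps)
  qed
  then show ?case using p1 by blast
qed

lemma agree_trivial:
  assumes S: "finite S" and P: "set_pmf P \<subseteq> S" and f: "\<forall>s\<in>S. 0 \<le> f s \<and> f s \<le> 1"
    and K: "\<forall>i\<in>{1..N}. is_partition_of S (K i)"
    and c: "N = 1 \<or> 1 < \<delta> \<or> 1 \<le> \<epsilon>" and e: "0 < \<epsilon>" and d: "0 < \<delta>"
  shows "global_agree P f N K \<epsilon> \<delta>"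
  unfolding global_agree_def
proof (intro ballI)
  fix i k assume i: "i \<in> {1..N}" and k: "k \<in> {1..N}"
  let ?X = "{s. \<bar>agent_exp P f K i s - agent_exp P f K k s\<bar> \<le> \<epsilon>}"
  show "1 - \<delta> < measure_pmf.prob P ?X"
  proof (cases "1 < \<delta>")
    case True then show ?thesis using measure_nonneg[of "measure_pmf P" ?X] by linarith
  next
    case False
    have all: "\<forall>s\<in>S. s \<in> ?X"
    proof
      fix s assume s: "s \<in> S"
      show "s \<in> ?X"
      proof (cases "N = 1")
        case True then have "i = k" using i k by auto
        then show ?thesis using e by simp
      next
        case False
        then have "1 \<le> \<epsilon>" using c \<open>\<not> 1 < \<delta>\<close> by blast
        moreover have "0 \<le> agent_exp P f K i s \<and> agent_exp P f K i s \<le> 1"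
          using agent_exp_bounds[OF S f _ s] K i by blast
        moreover have "0 \<le> agent_exp P f K k s \<and> agent_exp P f K k s \<le> 1"
          using agent_exp_bounds[OF S f _ s] K k by blast
        ultimately show ?thesis by auto
      qed
    qed
    have "measure_pmf.prob P ?X = (\<Sum>s\<in>S. pmf P s * indicator ?X s)" by (rule prob_fin[OF S P])
    also have "\<dots> = (\<Sum>s\<in>S. pmf P s)" using all by (intro sum.cong) (auto simp: indicator_def)
    also have "\<dots> = 1" using S P by (rule sum_pmf_eq_1)
    finally show ?thesis using d by simp
  qed
qed

lemma st_run_block:
  assumes "0 < length (st_sched N pin pout)"
  shows "st_run P f N pin pout K0 (n * length (st_sched N pin pout)) = ((run_msgs P f (st_sched N pin pout)) ^^ n) K0"
  using assms unfolding st_run_def Let_def by (simp add: run_msgs_def)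

lemma final_arith:
  fixes N :: nat and \<delta> \<epsilon> :: real and n L M :: nat
  assumes N: "1 \<le> N" and d: "0 < \<delta>" "\<delta> \<le> 1" and e: "0 < \<epsilon>" "\<epsilon> < 1"
    and L: "L \<le> 2 * N" and n: "n < M" and M: "M = nat \<lceil>2 * real N / (\<delta> * \<epsilon>^2)\<rceil> + 1"
  shows "real (n * L) \<le> 6 * real N ^ 7 / (\<delta> * \<epsilon>) ^ 2"
proof -
  define x where "x = \<delta> * \<epsilon>"
  have x0: "0 < x" and x1: "x \<le> 1" using d e unfolding x_def by (auto intro: mult_le_one)
  have "x^2 \<le> \<delta> * \<epsilon>^2" unfolding x_def power2_eq_square using d e
    by (simp add: mult_right_le_one_le mult_le_cancel_right1 mult.assoc mult_left_le)
  have A: "2 * real N / (\<delta> * \<epsilon>^2) \<le> 2 * real N / x^2"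
  proof -
    have "0 < \<delta> * \<epsilon>^2 * x^2" using d e x0 by simp
    then show ?thesis using \<open>x^2 \<le> \<delta> * \<epsilon>^2\<close> by (intro divide_left_mono) auto
  qed
  have B: "1 \<le> 1 / x^2" using x0 x1 by (simp add: power_le_one)
  have "real n \<le> real (nat \<lceil>2 * real N / (\<delta> * \<epsilon>^2)\<rceil>)" using n M by simp
  also have "\<dots> \<le> 2 * real N / (\<delta> * \<epsilon>^2) + 1"
  proof -
    have "0 \<le> 2 * real N / (\<delta> * \<epsilon>^2)" using d e by simp
    then have "0 \<le> \<lceil>2 * real N / (\<delta> * \<epsilon>^2)\<rceil>" by simp
    then have "real (nat \<lceil>2 * real N / (\<delta> * \<epsilon>^2)\<rceil>) = real_of_int \<lceil>2 * real N / (\<delta> * \<epsilon>^2)\<rceil>" by simp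
    also have "\<dots> \<le> 2 * real N / (\<delta> * \<epsilon>^2) + 1" by (rule of_int_ceiling_le_add_one)
    finally show ?thesis .
  qed
  also have "\<dots> \<le> 2 * real N / x^2 + 1 / x^2" using A B by simp
  finally have nb: "real n \<le> (2 * real N + 1) / x^2" by (simp add: add_divide_distrib)
  have "real (n * L) = real n * real L" by simp
  also have "\<dots> \<le> (2 * real N + 1) / x^2 * (2 * real N)"
    using nb L by (intro mult_mono) auto
  also have "\<dots> \<le> 6 * real N ^ 2 / x^2"
  proof -
    have "(2 * real N + 1) * (2 * real N) \<le> 6 * real N ^ 2" using N by (simp add: power2_eq_square algebra_simps)
    then show ?thesis using x0 by (simp add: divide_right_mono)
  qed
  also have "\<dots> \<le> 6 * real N ^ 7 / x^2"
  proof -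
    have "real N ^ 2 \<le> real N ^ 7" using N by (intro power_increasing) auto
    then show ?thesis using x0 by (intro divide_right_mono) auto
  qed
  finally show ?thesis unfolding x_def .
qed

theorem lemma3:
  "\<exists>C>0. \<forall>(N::nat) (S::nat set) (P::nat pmf) (f::nat \<Rightarrow> real) (K0::kstate)
          (E::(nat \<times> nat) set) (pin::nat \<Rightarrow> nat) (pout::nat \<Rightarrow> nat) (\<epsilon>::real) (\<delta>::real).
     N \<ge> 1 \<and> finite S \<and> set_pmf P \<subseteq> S \<and> (\<forall>s\<in>S. 0 \<le> f s \<and> f s \<le> 1) \<and>
     (\<forall>i\<in>{1..N}. is_partition_of S (K0 i)) \<and> spanning_trees N E pin pout \<and>
     \<epsilon> > 0 \<and> \<delta> > 0 \<longrightarrow>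
     (\<exists>T::nat. real T \<le> C * real N ^ 7 / (\<delta> * \<epsilon>) ^ 2 \<and>
               global_agree P f N (st_run P f N pin pout K0 T) \<epsilon> \<delta>)"
proof (rule exI[of _ 6], intro conjI allI impI)
  show "(0::real) < 6" by simp
  fix N :: nat and S :: "nat set" and P :: "nat pmf" and f :: "nat \<Rightarrow> real" and K0 :: kstate
    and E :: "(nat \<times> nat) set" and pin pout :: "nat \<Rightarrow> nat" and \<epsilon> \<delta> :: real
  assume H: "N \<ge> 1 \<and> finite S \<and> set_pmf P \<subseteq> S \<and> (\<forall>s\<in>S. 0 \<le> f s \<and> f s \<le> 1) \<and>
     (\<forall>i\<in>{1..N}. is_partition_of S (K0 i)) \<and> spanning_trees N E pin pout \<and> \<epsilon> > 0 \<and> \<delta> > (0::real)"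
  then have N: "1 \<le> N" and S: "finite S" and P: "set_pmf P \<subseteq> S" and f: "\<forall>s\<in>S. 0 \<le> f s \<and> f s \<le> 1"
    and K0: "\<forall>i\<in>{1..N}. is_partition_of S (K0 i)" and sp: "spanning_trees N E pin pout"
    and e: "0 < \<epsilon>" and d: "0 < \<delta>" by auto
  let ?sch = "st_sched N pin pout"
  let ?R = "run_msgs P f ?sch"
  show "\<exists>T::nat. real T \<le> 6 * real N ^ 7 / (\<delta> * \<epsilon>) ^ 2 \<and>
               global_agree P f N (st_run P f N pin pout K0 T) \<epsilon> \<delta>"
  proof (cases "N = 1 \<or> 1 < \<delta> \<or> 1 \<le> \<epsilon>")
    case True
    have "st_run P f N pin pout K0 0 = K0" unfolding st_run_def Let_def run_msgs_def by simp
    then have "global_agree P f N (st_run P f N pin pout K0 0) \<epsilon> \<delta>"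
      using agree_trivial[OF S P f K0 True e d] by simp
    moreover have "real 0 \<le> 6 * real N ^ 7 / (\<delta> * \<epsilon>) ^ 2" by simp
    ultimately show ?thesis by blast
  next
    case False
    then have N2: "2 \<le> N" and d1: "\<delta> \<le> 1" and e1: "\<epsilon> < 1" using N by auto
    have "\<exists>u A. (u, 2, A) \<in> set ?sch \<and> 1 \<in> A" using sched_cover[OF sp, of 2 1] N2 by auto
    then have Lpos: "0 < length ?sch" by (cases ?sch) auto
    define M where "M = nat \<lceil>2 * real N / (\<delta> * \<epsilon>^2)\<rceil> + 1"
    have "\<exists>n<M. global_agree P f N ((?R ^^ n) K0) \<epsilon> \<delta>"
    proof (rule ccontr)
      assume "\<not> ?thesis"
      then have na: "\<forall>m<M. \<not> global_agree P f N ((?R ^^ m) K0) \<epsilon> \<delta>" by blast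
      have it: "(\<forall>i\<in>{1..N}. is_partition_of S ((?R ^^ M) K0 i))"
        "real M * (\<delta> * \<epsilon>^2 / 2) \<le> Phi P f N S ((?R ^^ M) K0)"
        using iter[OF S P f sp K0 e d, of M] na by blast+
      have "Phi P f N S ((?R ^^ M) K0) \<le> real N" using Phi_bounds[OF S P f it(1)] by blast
      moreover have "real N < real M * (\<delta> * \<epsilon>^2 / 2)"
      proof -
        have pos: "0 < \<delta> * \<epsilon>^2" using d e by simp
        have "2 * real N / (\<delta> * \<epsilon>^2) < real M" unfolding M_def by linarith
        then have "2 * real N < real M * (\<delta> * \<epsilon>^2)" using pos by (simp add: divide_less_eq)
        then show ?thesis by simp
      qed
      ultimately show False using it(2) by simp
    qed
    then obtain n where n: "n < M" and ag: "global_agree P f N ((?R ^^ n) K0) \<epsilon> \<delta>" by blast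
    have "real (n * length ?sch) \<le> 6 * real N ^ 7 / (\<delta> * \<epsilon>) ^ 2"
      using final_arith[OF N d(1) d1 e e1 sched_len n M_def] .
    moreover have "global_agree P f N (st_run P f N pin pout K0 (n * length ?sch)) \<epsilon> \<delta>"
      using ag st_run_block[OF Lpos, of P f K0 n] by simp
    ultimately show ?thesis by blast
  qed
qed




end
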